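(* Let $0<p<1$, $0\le\ell<\infty$, and let $f$ be a measurable, non-negative, non-increasing function on $(\ell,\infty)$. Then $$\int_\ell^\infty\Big(\frac1x\int_x^\infty f(y)dy\Big)^p dx\le p\int_\ell^\infty f^p(x)\Big(\int_{\ell/x}^1 t^{-p}(1-t)^{p-1}dt\Big)dx,$$ and the constant $p$ is sharp. In particular, for $\ell=0$, $$\int_0^\infty\Big(\frac1x\int_x^\infty f(y)dy\Big)^p dx\le\frac{\pi p}{\sin\pi p}\int_0^\infty f^p(x)dx$$ for all non-negative non-increasing $f$ on $(0,\infty)$, and the constant $\frac{\pi p}{\sin \pi p}$ is sharp. *)

theory Defs
  imports "HOL-Analysis.Analysis"
begin

definition ennpowr :: "ennreal \<Rightarrow> real \<Rightarrow> ennreal" where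
  "ennpowr a q = (if a = \<infinity> then \<infinity> else ennreal (enn2real a powr q))"

definition hardy_lhs :: "real \<Rightarrow> real \<Rightarrow> (real \<Rightarrow> real) \<Rightarrow> ennreal" where
  "hardy_lhs l p f =
     (\<integral>\<^sup>+ x \<in> {l<..}. ennpowr ((\<integral>\<^sup>+ y \<in> {x<..}. ennreal (f y) \<partial>lborel) / ennreal x) p \<partial>lborel)"

definition hardy_weight :: "real \<Rightarrow> real \<Rightarrow> real \<Rightarrow> ennreal" where
  "hardy_weight l p x =
     (\<integral>\<^sup>+ t \<in> {l/x<..<1}. ennreal (t powr (-p) * (1 - t) powr (p - 1)) \<partial>lborel)"

definition hardy_rhs :: "real \<Rightarrow> real \<Rightarrow> (real \<Rightarrow> real) \<Rightarrow> ennreal" where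
  "hardy_rhs l p f =
     (\<integral>\<^sup>+ x \<in> {l<..}. ennreal (f x powr p) * hardy_weight l p x \<partial>lborel)"

definition admissible :: "real \<Rightarrow> (real \<Rightarrow> real) \<Rightarrow> bool" where
  "admissible l f \<longleftrightarrow>
     set_borel_measurable lborel {l<..} f \<and>
     (\<forall>x>l. 0 \<le> f x) \<and>
     (\<forall>x y. l < x \<longrightarrow> x \<le> y \<longrightarrow> f y \<le> f x)"

end

theory Submission
  imports Defs
begin


locale pw =
  fixes g :: "real \<Rightarrow> real" and x M p :: real
  assumes p0: "0 < p" and p1: "p < 1"
  and gmeas[measurable]: "g \<in> borel_measurable borel"
  and gnn: "\<And>s. s > x \<Longrightarrow> 0 \<le> g s"
  and gbnd: "\<And>s. s > x \<Longrightarrow> g s \<le> M"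
  and gmono: "\<And>s t. x < s \<Longrightarrow> s \<le> t \<Longrightarrow> g t \<le> g s"
begin

definition G where "G s = (\<integral>\<^sup>+ t\<in>{x<..<s}. ennreal (g t) \<partial>lborel)"
definition Gr where "Gr s = enn2real (G s)"
definition Ginf where "Ginf = (\<integral>\<^sup>+ t\<in>{x<..}. ennreal (g t) \<partial>lborel)"

lemma M0: "0 \<le> M" using gnn[of "x+1"] gbnd[of "x+1"] by auto

lemma G_le: "G s \<le> ennreal (M * (s - x))" if "x \<le> s"
proof -
  have "G s \<le> (\<integral>\<^sup>+ t. ennreal M * indicator {x<..<s} t \<partial>lborel)"
    unfolding G_def by (intro nn_integral_mono) (auto simp: indicator_def gbnd intro!: ennreal_leI)
  also have "\<dots> = ennreal M * ennreal (s - x)" using that by (subst nn_integral_cmult_indicator) auto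
  finally show ?thesis using M0 that by (simp add: ennreal_mult')
qed

lemma G_le0: "G s = 0" if "s \<le> x"
  proof -
  have "(\<lambda>t. ennreal (g t) * indicator {x<..<s} t) = (\<lambda>_. 0)" using that by (auto simp: indicator_def)
  thus ?thesis unfolding G_def by simp
qed

lemma G_fin: "G s < top"
proof (cases "x \<le> s")
  case True show ?thesis using G_le[OF True] ennreal_less_top le_less_trans by blast
qed (auto simp: G_le0)

lemma G_eq: "G s = ennreal (Gr s)"
  unfolding Gr_def using G_fin[of s] by (simp add: ennreal_enn2real_if less_top)

lemma Gr_nn: "0 \<le> Gr s" unfolding Gr_def by simp

lemma G_mono: "G s \<le> G s'" if "s \<le> s'"
  unfolding G_def using that by (intro nn_integral_mono) (auto simp: indicator_def)

lemma G_le_Ginf: "G s \<le> Ginf"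
  unfolding G_def Ginf_def by (intro nn_integral_mono) (auto simp: indicator_def)

lemma G_diff: "G s' \<le> G s + ennreal (M * (s' - s))" if "s \<le> s'"
proof -
  have "G s' \<le> (\<integral>\<^sup>+ t. ennreal (g t) * indicator {x<..<s} t + ennreal M * indicator {s..<s'} t \<partial>lborel)"
    unfolding G_def
  proof (intro nn_integral_mono)
    fix t show "ennreal (g t) * indicator {x<..<s'} t \<le> ennreal (g t) * indicator {x<..<s} t + ennreal M * indicator {s..<s'} t"
      using gbnd[of t] by (auto simp: indicator_def intro!: ennreal_leI)
  qed
  also have "\<dots> = G s + (\<integral>\<^sup>+ t. ennreal M * indicator {s..<s'} t \<partial>lborel)"
    unfolding G_def by (rule nn_integral_add) auto
  also have "(\<integral>\<^sup>+ t. ennreal M * indicator {s..<s'} t \<partial>lborel) = ennreal M * ennreal (s' - s)"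
    using that by (simp add: nn_integral_cmult_indicator)
  also have "ennreal M * ennreal (s' - s) = ennreal (M * (s' - s))"
    using M0 that by (simp add: ennreal_mult')
  finally show ?thesis .
qed

lemma Gr_mono: "Gr s \<le> Gr s'" if "s \<le> s'"
  using G_mono[OF that] by (simp add: G_eq Gr_nn)

lemma Gr_diff: "Gr s' \<le> Gr s + M * (s' - s)" if "s \<le> s'"
proof -
  have "ennreal (Gr s + M * (s' - s)) = ennreal (Gr s) + ennreal (M * (s' - s))"
    using M0 that Gr_nn by (intro ennreal_plus) auto
  hence "ennreal (Gr s') \<le> ennreal (Gr s + M * (s' - s))"
    using G_diff[OF that] by (simp only: G_eq)
  moreover have "0 \<le> Gr s + M * (s' - s)" using M0 that Gr_nn by auto
  ultimately show ?thesis by (simp only: ennreal_le_iff)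
qed

lemma Gr_cont: "continuous_on A Gr"
proof (rule lipschitz_on_continuous_on)
  show "M-lipschitz_on A Gr"
  proof (rule lipschitz_onI)
    fix a b assume "a \<in> A" "b \<in> A"
    show "dist (Gr a) (Gr b) \<le> M * dist a b"
    proof (cases "a \<le> b")
      case True thus ?thesis using Gr_diff[OF True] Gr_mono[OF True] by (simp add: dist_real_def)
    next
      case False thus ?thesis using Gr_diff[of b a] Gr_mono[of b a] by (simp add: dist_real_def)
    qed
  qed (rule M0)
qed

lemma Gr_meas[measurable]: "Gr \<in> borel_measurable borel"
  by (rule borel_measurable_mono) (simp add: mono_def Gr_mono)

lemma G_lower: "ennreal (g s * (s - x)) \<le> G s" if "x < s"
proof -
  have "ennreal (g s * (s - x)) = (\<integral>\<^sup>+ t. ennreal (g s) * indicator {x<..<s} t \<partial>lborel)"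
    using that gnn[OF that] by (subst nn_integral_cmult_indicator) (auto simp: ennreal_mult')
  also have "\<dots> \<le> G s" unfolding G_def
    by (intro nn_integral_mono) (auto simp: indicator_def intro!: gmono ennreal_leI)
  finally show ?thesis .
qed

lemma Gr_lower: "g s * (s - x) \<le> Gr s" if "x < s"
  using G_lower[OF that] gnn[OF that] that Gr_nn by (simp add: G_eq)

lemma Ginf_SUP: "Ginf = (SUP n. G (x + real n))"
proof -
  have "Ginf = (\<integral>\<^sup>+ t. (SUP n. ennreal (g t) * indicator {x<..<x + real n} t) \<partial>lborel)"
    unfolding Ginf_def
  proof (intro nn_integral_cong)
    fix t
    show "ennreal (g t) * indicator {x<..} t = (SUP n. ennreal (g t) * indicator {x<..<x + real n} t)"
    proof (cases "x < t")
      case True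
      obtain n :: nat where "t - x < n" using reals_Archimedean2 by blast
      hence "ennreal (g t) * indicator {x<..<x + real n} t = ennreal (g t)" using True by auto
      moreover have "ennreal (g t) * indicator {x<..<x + real m} t \<le> ennreal (g t)" for m
        by (auto simp: indicator_def)
      ultimately have "(SUP n. ennreal (g t) * indicator {x<..<x + real n} t) = ennreal (g t)"
        by (metis (no_types, lifting) SUP_least SUP_upper UNIV_I antisym)
      thus ?thesis using True by simp
    qed (auto simp: indicator_def)
  qed
  also have "\<dots> = (SUP n. G (x + real n))"
    unfolding G_def
    by (subst nn_integral_monotone_convergence_SUP)
       (auto simp: incseq_def le_fun_def split: split_indicator)
  finally show ?thesis .
qed

end


context pw begin

lemma int_tail: "(\<integral>\<^sup>+y\<in>{a..}. ennreal (y powr (p-2)) \<partial>lborel) = ennreal (a powr (p-1) / (1-p))"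
  if "0 < a" for a
proof -
  have "((\<lambda>y. y powr (p-2)) has_integral -(a powr (p-2+1))/(p-2+1)) {a..}"
    using p1 that by (intro has_integral_powr_to_inf) auto
  hence "(\<integral>\<^sup>+y. ennreal (y powr (p-2)) * indicator {a..} y \<partial>lborel) = ennreal (-(a powr (p-2+1))/(p-2+1))"
    by (intro nn_integral_has_integral_lebesgue') auto
  also have "-(a powr (p-2+1))/(p-2+1) = a powr (p-1) / (1-p)"
    using p1 by (simp add: field_simps)
  finally show ?thesis .
qed

lemma step1:
  assumes "x < s"
  shows "ennreal (g s) * (ennreal (1-p) * (\<integral>\<^sup>+y\<in>{Gr s..}. ennreal (y powr (p-2)) \<partial>lborel))
         \<le> ennreal (g s powr p * (s-x) powr (p-1))"
proof (cases "g s = 0")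
  case True thus ?thesis by simp
next
  case False
  hence gs: "g s > 0" using gnn[OF assms] by auto
  have pos: "0 < g s * (s - x)" using gs assms by auto
  have le: "g s * (s - x) \<le> Gr s" by (rule Gr_lower[OF assms])
  have a: "Gr s > 0" using pos le by linarith
  have eq: "ennreal (g s) * (ennreal (1-p) * (\<integral>\<^sup>+y\<in>{Gr s..}. ennreal (y powr (p-2)) \<partial>lborel))
        = ennreal (g s * ((1-p) * (Gr s powr (p-1) / (1-p))))"
  proof -
    have "ennreal (1-p) * ennreal (Gr s powr (p-1) / (1-p)) = ennreal (Gr s powr (p-1))"
      using p1 by (subst ennreal_mult[symmetric]) auto
    thus ?thesis using int_tail[OF a] gs p1 by (simp add: ennreal_mult[symmetric])
  qed
  have "g s * ((1-p) * (Gr s powr (p-1) / (1-p))) = g s * Gr s powr (p-1)"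
    using p1 by simp
  also have "\<dots> \<le> g s * (g s * (s - x)) powr (p-1)"
    using gs pos le p1 by (intro mult_left_mono powr_mono2') auto
  also have "g s * (g s * (s - x)) powr (p-1) = g s powr p * (s-x) powr (p-1)"
  proof -
    have e1: "(g s * (s - x)) powr (p-1) = g s powr (p-1) * (s-x) powr (p-1)" by (rule powr_mult)
    have "g s powr p = g s powr (1 + (p-1))" by simp
    also have "\<dots> = g s powr 1 * g s powr (p-1)" by (rule powr_add)
    also have "g s powr 1 = g s" using gs by simp
    finally show ?thesis using e1 by simp
  qed
  finally have r: "g s * ((1-p) * (Gr s powr (p-1) / (1-p))) \<le> g s powr p * (s-x) powr (p-1)" .
  show ?thesis unfolding eq by (rule ennreal_leI[OF r])
qed

definition K where "K = (\<integral>\<^sup>+ s\<in>{x<..}. ennreal (g s powr p * (s - x) powr (p - 1)) \<partial>lborel)"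
definition J where "J y = (\<integral>\<^sup>+ s. ennreal (g s) * indicator {x<..} s * indicator {Gr s..} y \<partial>lborel)"

lemma m2: "(\<lambda>(s, y). ennreal (g s) * indicator {x<..} s * indicator {Gr s..} y * ennreal (y powr (p-2))) \<in> borel_measurable (lborel \<Otimes>\<^sub>M lborel)"
proof -
  have *: "(\<lambda>(s, y). ennreal (g s) * indicator {x<..} s * indicator {Gr s..} y * ennreal (y powr (p-2)))
     = (\<lambda>z. ennreal (g (fst z)) * indicator {x<..} (fst z) * indicator {z. Gr (fst z) \<le> snd z} z * ennreal (snd z powr (p-2)))"
    by (auto simp: indicator_def fun_eq_iff)
  have "(\<lambda>z. ennreal (g (fst z)) * indicator {x<..} (fst z) * indicator {z. Gr (fst z) \<le> snd z} z * ennreal (snd z powr (p-2))) \<in> borel_measurable (borel \<Otimes>\<^sub>M borel)"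
    by measurable
  thus ?thesis unfolding * by (simp cong: measurable_cong_sets)
qed

lemma K_ge: "ennreal (1-p) * (\<integral>\<^sup>+ y. ennreal (y powr (p-2)) * J y \<partial>lborel) \<le> K"
proof -
  have "K \<ge> (\<integral>\<^sup>+ s. ennreal (g s) * (ennreal (1-p) * (\<integral>\<^sup>+y\<in>{Gr s..}. ennreal (y powr (p-2)) \<partial>lborel)) * indicator {x<..} s \<partial>lborel)"
    unfolding K_def
  proof (intro nn_integral_mono)
    fix s
    show "ennreal (g s) * (ennreal (1-p) * (\<integral>\<^sup>+y\<in>{Gr s..}. ennreal (y powr (p-2)) \<partial>lborel)) * indicator {x<..} s
        \<le> ennreal (g s powr p * (s - x) powr (p - 1)) * indicator {x<..} s"
    proof (cases "x < s")
      case True thus ?thesis using step1[OF True] by simp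
    qed simp
  qed
  also have "(\<integral>\<^sup>+ s. ennreal (g s) * (ennreal (1-p) * (\<integral>\<^sup>+y\<in>{Gr s..}. ennreal (y powr (p-2)) \<partial>lborel)) * indicator {x<..} s \<partial>lborel)
     = (\<integral>\<^sup>+ s. ennreal (1-p) * (\<integral>\<^sup>+ y. ennreal (g s) * indicator {x<..} s * indicator {Gr s..} y * ennreal (y powr (p-2)) \<partial>lborel) \<partial>lborel)"
  proof (intro nn_integral_cong)
    fix s :: real
    have "(\<integral>\<^sup>+ y. ennreal (g s) * indicator {x<..} s * indicator {Gr s..} y * ennreal (y powr (p-2)) \<partial>lborel)
        = (\<integral>\<^sup>+ y. (ennreal (g s) * indicator {x<..} s) * (ennreal (y powr (p-2)) * indicator {Gr s..} y) \<partial>lborel)"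
      by (intro nn_integral_cong) (simp add: mult_ac)
    also have "\<dots> = (ennreal (g s) * indicator {x<..} s) * (\<integral>\<^sup>+y\<in>{Gr s..}. ennreal (y powr (p-2)) \<partial>lborel)"
      by (rule nn_integral_cmult) measurable
    finally show "ennreal (g s) * (ennreal (1-p) * (\<integral>\<^sup>+y\<in>{Gr s..}. ennreal (y powr (p-2)) \<partial>lborel)) * indicator {x<..} s
       = ennreal (1-p) * (\<integral>\<^sup>+ y. ennreal (g s) * indicator {x<..} s * indicator {Gr s..} y * ennreal (y powr (p-2)) \<partial>lborel)"
      by (simp add: mult_ac)
  qed
  also have "\<dots> = ennreal (1-p) * (\<integral>\<^sup>+ s. (\<integral>\<^sup>+ y. ennreal (g s) * indicator {x<..} s * indicator {Gr s..} y * ennreal (y powr (p-2)) \<partial>lborel) \<partial>lborel)"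
    by (rule nn_integral_cmult) (rule lborel.borel_measurable_nn_integral[OF m2])
  also have "(\<integral>\<^sup>+ s. (\<integral>\<^sup>+ y. ennreal (g s) * indicator {x<..} s * indicator {Gr s..} y * ennreal (y powr (p-2)) \<partial>lborel) \<partial>lborel)
      = (\<integral>\<^sup>+ y. (\<integral>\<^sup>+ s. ennreal (g s) * indicator {x<..} s * indicator {Gr s..} y * ennreal (y powr (p-2)) \<partial>lborel) \<partial>lborel)"
    by (rule lborel_pair.Fubini'[symmetric, OF m2])
  also have "\<dots> = (\<integral>\<^sup>+ y. ennreal (y powr (p-2)) * J y \<partial>lborel)"
    unfolding J_def
  proof (intro nn_integral_cong)
    fix y :: real
    have *: "(\<lambda>s. ennreal (g s) * indicator {x<..} s * indicator {Gr s..} y) = (\<lambda>s. ennreal (g s) * indicator {x<..} s * indicator {s. Gr s \<le> y} s)"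
      by (auto simp: indicator_def fun_eq_iff)
    have mJ: "(\<lambda>s. ennreal (g s) * indicator {x<..} s * indicator {Gr s..} y) \<in> borel_measurable lborel"
      unfolding * by measurable
    show "(\<integral>\<^sup>+ s. ennreal (g s) * indicator {x<..} s * indicator {Gr s..} y * ennreal (y powr (p-2)) \<partial>lborel)
      = ennreal (y powr (p-2)) * (\<integral>\<^sup>+ s. ennreal (g s) * indicator {x<..} s * indicator {Gr s..} y \<partial>lborel)"
      by (subst nn_integral_cmult[symmetric, OF mJ]) (auto simp: mult_ac)
  qed
  finally show ?thesis by (simp add: mult_ac)
qed

end


context pw begin

lemma Gr_x: "Gr x = 0" unfolding Gr_def using G_le0[of x] by simp

lemma J_ge: assumes y: "0 \<le> y" shows "min (ennreal y) Ginf \<le> J y"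
proof (cases "ennreal y < Ginf")
  case True
  then obtain n where n: "ennreal y < G (x + real n)" unfolding Ginf_SUP by (auto simp: less_SUP_iff)
  define t where "t = x + real n"
  have yt: "y < Gr t" using n y unfolding t_def G_eq by (simp add: ennreal_less_iff)
  have "\<exists>\<sigma>. x \<le> \<sigma> \<and> \<sigma> \<le> t \<and> Gr \<sigma> = y"
    by (rule IVT') (use y yt Gr_x Gr_cont in \<open>auto simp: t_def\<close>)
  then obtain \<sigma> where sig: "x \<le> \<sigma>" "Gr \<sigma> = y" by blast
  have "ennreal y = G \<sigma>" using sig by (simp add: G_eq)
  also have "G \<sigma> \<le> J y" unfolding G_def J_def
  proof (intro nn_integral_mono)
    fix s
    show "ennreal (g s) * indicator {x<..<\<sigma>} s \<le> ennreal (g s) * indicator {x<..} s * indicator {Gr s..} y"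
    proof (cases "x < s \<and> s < \<sigma>")
      case True
      hence "Gr s \<le> y" using Gr_mono[of s \<sigma>] sig by auto
      thus ?thesis using True by (simp add: indicator_def)
    qed (auto simp: indicator_def)
  qed
  finally show ?thesis by (simp add: min.coboundedI1)
next
  case False
  hence Gy: "Ginf \<le> ennreal y" by simp
  have "Ginf \<le> J y" unfolding Ginf_def J_def
  proof (intro nn_integral_mono)
    fix s
    show "ennreal (g s) * indicator {x<..} s \<le> ennreal (g s) * indicator {x<..} s * indicator {Gr s..} y"
    proof (cases "x < s")
      case True
      have "ennreal (Gr s) \<le> ennreal y" using G_le_Ginf[of s] Gy by (simp add: G_eq)
      hence "Gr s \<le> y" using y by (simp add: ennreal_le_iff)
      thus ?thesis using True by (simp add: indicator_def)
    qed (auto simp: indicator_def)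
  qed
  thus ?thesis by (simp add: min.coboundedI2)
qed

lemma int_head: "(\<integral>\<^sup>+y\<in>{0..c}. ennreal (y powr (p-1)) \<partial>lborel) = ennreal (c powr p / p)"
  if "0 \<le> c" for c
proof -
  have "((\<lambda>y. y powr (p-1)) has_integral (c powr (p-1+1) / (p-1+1))) {0..c}"
    using p0 that by (intro has_integral_powr_from_0) auto
  hence "(\<integral>\<^sup>+y. ennreal (y powr (p-1)) * indicator {0..c} y \<partial>lborel) = ennreal (c powr (p-1+1) / (p-1+1))"
    by (intro nn_integral_has_integral_lebesgue') auto
  thus ?thesis by simp
qed

lemma key: assumes c: "0 < c" and cG: "ennreal c \<le> Ginf"
  shows "ennreal (c powr p) \<le> ennreal p * K"
proof -
  have "(\<integral>\<^sup>+y. ennreal (y powr (p-1)) * indicator {0..c} y + ennreal c * (ennreal (y powr (p-2)) * indicator {c..} y) \<partial>lborel)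
        \<le> (\<integral>\<^sup>+ y. ennreal (y powr (p-2)) * J y \<partial>lborel)"
  proof (intro nn_integral_mono_AE)
    show "AE y in lborel. ennreal (y powr (p-1)) * indicator {0..c} y + ennreal c * (ennreal (y powr (p-2)) * indicator {c..} y) \<le> ennreal (y powr (p-2)) * J y"
      using AE_lborel_singleton[of c]
    proof eventually_elim
      fix y :: real assume yc: "y \<noteq> c"
      show "ennreal (y powr (p-1)) * indicator {0..c} y + ennreal c * (ennreal (y powr (p-2)) * indicator {c..} y) \<le> ennreal (y powr (p-2)) * J y"
      proof (cases "0 \<le> y")
        case False thus ?thesis using c by (simp add: indicator_def)
      next
        case y0: True
        have Jy: "min (ennreal y) Ginf \<le> J y" by (rule J_ge[OF y0])
        show ?thesis
        proof (cases "y < c")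
          case True
          have "min (ennreal y) Ginf = ennreal y" using True cG
            by (metis ennreal_leI less_imp_le min.absorb1 order.trans)
          hence yJ: "ennreal y \<le> J y" using Jy by simp
          have "ennreal (y powr (p-1)) \<le> ennreal (y powr (p-2)) * ennreal y"
          proof (cases "y = 0")
            case False
            hence "y powr (p-2) * y = y powr (1 + (p-2))" using y0
              by (subst powr_mult_base[symmetric]) (auto simp: mult.commute)
            hence "y powr (p-1) = y powr (p-2) * y" by (simp add: algebra_simps)
            thus ?thesis using y0 by (simp add: ennreal_mult[symmetric])
          qed simp
          also have "\<dots> \<le> ennreal (y powr (p-2)) * J y" by (intro mult_left_mono yJ) auto
          finally show ?thesis using True y0 by (simp add: indicator_def)
        next
          case False
          hence yc': "c < y" using yc by auto
          have "min (ennreal y) Ginf \<ge> ennreal c" using cG yc' by (simp add: ennreal_leI)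
          hence cJ: "ennreal c \<le> J y" using Jy order.trans by blast
          have "ennreal c * ennreal (y powr (p-2)) \<le> J y * ennreal (y powr (p-2))"
            by (intro mult_right_mono cJ) auto
          thus ?thesis using yc' by (simp add: indicator_def mult_ac)
        qed
      qed
    qed
  qed
  also have "(\<integral>\<^sup>+y. ennreal (y powr (p-1)) * indicator {0..c} y + ennreal c * (ennreal (y powr (p-2)) * indicator {c..} y) \<partial>lborel)
     = ennreal (c powr p / p) + ennreal c * ennreal (c powr (p-1) / (1-p))"
    using int_head[of c] int_tail[OF c] c
    by (subst nn_integral_add) (auto simp: nn_integral_cmult)
  also have "\<dots> = ennreal (c powr p / p + c powr p / (1-p))"
  proof -
    have cc: "c * c powr (p-1) = c powr p"
      using c by (subst powr_mult_base) auto
    have e1: "c * (c powr (p-1) / (1-p)) = c powr p / (1-p)"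
      by (metis cc times_divide_eq_right)
    have e2: "ennreal c * ennreal (c powr (p-1) / (1-p)) = ennreal (c * (c powr (p-1) / (1-p)))"
      using c p1 by (subst ennreal_mult) auto
    have "ennreal c * ennreal (c powr (p-1) / (1-p)) = ennreal (c powr p / (1-p))" using e1 e2 by metis
    moreover have "ennreal (c powr p / p + c powr p / (1-p)) = ennreal (c powr p / p) + ennreal (c powr p / (1-p))"
      using p0 p1 by (intro ennreal_plus) auto
    ultimately show ?thesis by simp
  qed
  finally have I: "ennreal (c powr p / p + c powr p / (1-p)) \<le> (\<integral>\<^sup>+ y. ennreal (y powr (p-2)) * J y \<partial>lborel)" .
  have "ennreal (c powr p) = ennreal p * (ennreal (1-p) * ennreal (c powr p / p + c powr p / (1-p)))"
  proof -
    have "c powr p = p * ((1-p) * (c powr p / p + c powr p / (1-p)))" using p0 p1 by (simp add: field_simps)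
    moreover have "ennreal (p * ((1-p) * (c powr p / p + c powr p / (1-p)))) = ennreal p * (ennreal (1-p) * ennreal (c powr p / p + c powr p / (1-p)))"
      using p0 p1 by (simp add: ennreal_mult)
    ultimately show ?thesis by simp
  qed
  also have "\<dots> \<le> ennreal p * (ennreal (1-p) * (\<integral>\<^sup>+ y. ennreal (y powr (p-2)) * J y \<partial>lborel))"
    by (intro mult_left_mono I) auto
  also have "\<dots> \<le> ennreal p * K" by (intro mult_left_mono K_ge) auto
  finally show ?thesis .
qed

lemma pointwise: "ennpowr Ginf p \<le> ennreal p * K"
proof (cases "Ginf = \<infinity>")
  case True
  have "ennreal p * K = top"
  proof (rule ccontr)
    assume "ennreal p * K \<noteq> top"
    then obtain n :: nat where n: "ennreal p * K < of_nat n" using ennreal_Ex_less_of_nat less_top by blast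
    define c where "c = real (Suc n) powr (1/p)"
    have c0: "0 < c" unfolding c_def by simp
    have "c powr p = real (Suc n)" unfolding c_def using p0 by (simp add: powr_powr)
    hence "ennreal (real (Suc n)) \<le> ennreal p * K" using key[OF c0] True by simp
    hence "ennreal (real (Suc n)) < ennreal (real n)" using n
      by (metis ennreal_of_nat_eq_real_of_nat le_less_trans)
    thus False by (simp add: ennreal_less_iff)
  qed
  thus ?thesis using True by (simp add: ennpowr_def)
next
  case False
  then obtain c where c: "Ginf = ennreal c" "0 \<le> c" by (cases Ginf) auto
  show ?thesis
  proof (cases "c = 0")
    case True thus ?thesis using c by (simp add: ennpowr_def)
  next
    case False
    hence "0 < c" using c by auto
    thus ?thesis using key[of c] c by (simp add: ennpowr_def)
  qed
qed

end


lemma adm_pw: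
  assumes adm: "admissible l f" and x: "l < x" and p: "0 < p" "p < 1"
  shows "pw (\<lambda>y. indicator {l<..} y * f y) x (f x) p"
proof
  have "(\<lambda>y. indicator {l<..} y *\<^sub>R f y) \<in> borel_measurable lborel"
    using adm unfolding admissible_def set_borel_measurable_def by auto
  thus "(\<lambda>y. indicator {l<..} y * f y) \<in> borel_measurable borel"
    by (simp cong: measurable_cong_sets)
qed (use adm x p in \<open>auto simp: admissible_def indicator_def\<close>)

lemma PW:
  assumes adm: "admissible l f" and x: "l < x" and p: "0 < p" "p < 1"
  shows "ennpowr (\<integral>\<^sup>+ y\<in>{x<..}. ennreal (f y) \<partial>lborel) p
     \<le> ennreal p * (\<integral>\<^sup>+ s\<in>{x<..}. ennreal (f s powr p * (s - x) powr (p - 1)) \<partial>lborel)"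
proof -
  interpret pw "\<lambda>y. indicator {l<..} y * f y" x "f x" p by (rule adm_pw[OF assms])
  have "Ginf = (\<integral>\<^sup>+ y\<in>{x<..}. ennreal (f y) \<partial>lborel)"
    unfolding Ginf_def using x by (intro nn_integral_cong) (auto simp: indicator_def)
  moreover have "K = (\<integral>\<^sup>+ s\<in>{x<..}. ennreal (f s powr p * (s - x) powr (p - 1)) \<partial>lborel)"
    unfolding K_def using x by (intro nn_integral_cong) (auto simp: indicator_def)
  ultimately show ?thesis using pointwise by simp
qed

lemma lhs_rewrite:
  assumes x: "0 < x"
  shows "ennpowr (F / ennreal x) p = ennreal (x powr -p) * ennpowr F p"
proof (cases "F = top")
  case True
  thus ?thesis using x by (simp add: ennpowr_def ennreal_top_divide ennreal_mult_top)
next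
  case False
  then obtain c where c: "F = ennreal c" "0 \<le> c" by (cases F) auto
  have "ennreal c / ennreal x = ennreal (c / x)" by (rule divide_ennreal[OF c(2) x])
  moreover have "(c / x) powr p = x powr -p * c powr p"
    using c x by (simp add: powr_divide powr_minus_divide)
  ultimately show ?thesis using c x by (simp add: ennpowr_def ennreal_mult[symmetric])
qed

lemma subst_weight:
  assumes s: "0 < s" and l: "0 \<le> l"
  shows "(\<integral>\<^sup>+ x. indicator {l<..<s} x * ennreal (x powr -p * (s - x) powr (p - 1)) \<partial>lborel)
       = (\<integral>\<^sup>+ t\<in>{l/s<..<1}. ennreal (t powr (-p) * (1 - t) powr (p - 1)) \<partial>lborel)"
proof -
  have "(\<integral>\<^sup>+ x. indicator {l<..<s} x * ennreal (x powr -p * (s - x) powr (p - 1)) \<partial>lborel)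
    = \<bar>s\<bar> * (\<integral>\<^sup>+ u. indicator {l<..<s} (0 + s * u) * ennreal ((0 + s * u) powr -p * (s - (0 + s * u)) powr (p - 1)) \<partial>lborel)"
    using s by (intro nn_integral_real_affine) auto
  also have "\<dots> = (\<integral>\<^sup>+ u. ennreal s * (indicator {l<..<s} (s * u) * ennreal ((s * u) powr -p * (s - s * u) powr (p - 1))) \<partial>lborel)"
    using s by (subst nn_integral_cmult) auto
  also have "\<dots> = (\<integral>\<^sup>+ t\<in>{l/s<..<1}. ennreal (t powr (-p) * (1 - t) powr (p - 1)) \<partial>lborel)"
  proof (intro nn_integral_cong)
    fix u :: real
    show "ennreal s * (indicator {l<..<s} (s * u) * ennreal ((s * u) powr -p * (s - s * u) powr (p - 1)))
      = ennreal (u powr (-p) * (1 - u) powr (p - 1)) * indicator {l/s<..<1} u"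
    proof (cases "l < s * u \<and> s * u < s")
      case True
      hence u: "l / s < u" "u < 1" using s by (auto simp: field_simps)
      have u0: "0 < u" using u(1) l s by (smt (verit) divide_nonneg_pos)
      have "s * ((s * u) powr -p * (s - s * u) powr (p - 1))
          = (s powr 1 * s powr -p * s powr (p - 1)) * (u powr (-p) * (1 - u) powr (p - 1))"
      proof -
        have "s - s * u = s * (1 - u)" by (simp add: algebra_simps)
        thus ?thesis using s by (simp add: powr_mult mult_ac)
      qed
      also have "s powr 1 * s powr -p * s powr (p - 1) = s powr (1 + -p + (p - 1))"
        by (simp only: powr_add)
      also have "\<dots> = 1" using s by simp
      finally have "s * ((s * u) powr -p * (s - s * u) powr (p - 1)) = u powr (-p) * (1 - u) powr (p - 1)" by simp
      moreover have "ennreal s * ennreal ((s * u) powr -p * (s - s * u) powr (p - 1)) = ennreal (s * ((s * u) powr -p * (s - s * u) powr (p - 1)))"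
        using s by (simp add: ennreal_mult)
      ultimately show ?thesis using True u by (simp add: indicator_def)
    next
      case False
      hence "\<not> (l / s < u \<and> u < 1)" using s by (auto simp: field_simps)
      hence "indicator {l/s<..<1} u = (0::ennreal)" by (simp add: indicator_def)
      moreover have "indicator {l<..<s} (s * u) = (0::ennreal)" using False by (simp add: indicator_def)
      ultimately show ?thesis by simp
    qed
  qed
  finally show ?thesis .
qed



lemma swap:
  assumes adm: "admissible l f" and l: "0 \<le> l" and p: "0 < p" "p < 1"
  shows "(\<integral>\<^sup>+ x\<in>{l<..}. ennreal (x powr -p) * (ennreal p * (\<integral>\<^sup>+ s\<in>{x<..}. ennreal (f s powr p * (s - x) powr (p - 1)) \<partial>lborel)) \<partial>lborel)
         = ennreal p * hardy_rhs l p f"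
proof -
  define fr where "fr s = (indicator {l<..} s * f s) powr p" for s
  have fm: "(\<lambda>y. indicator {l<..} y * f y) \<in> borel_measurable borel"
  proof -
    have "(\<lambda>y. indicator {l<..} y *\<^sub>R f y) \<in> borel_measurable lborel"
      using adm unfolding admissible_def set_borel_measurable_def by auto
    thus ?thesis by (simp cong: measurable_cong_sets)
  qed
  have frm[measurable]: "fr \<in> borel_measurable borel" unfolding fr_def using fm by measurable
  define \<Phi> where "\<Phi> x s = indicator {l<..} x * indicator {x<..} s * ennreal (x powr -p) * ennreal (fr s) * ennreal ((s - x) powr (p - 1))" for x s :: real
  have m2: "(\<lambda>(x, s). \<Phi> x s) \<in> borel_measurable (lborel \<Otimes>\<^sub>M lborel)"
  proof -
    have *: "(\<lambda>(x, s). \<Phi> x s) = (\<lambda>z. indicator {l<..} (fst z) * indicator {z. fst z < snd z} z * ennreal (fst z powr -p) * ennreal (fr (snd z)) * ennreal ((snd z - fst z) powr (p - 1)))"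
      by (auto simp: \<Phi>_def indicator_def fun_eq_iff)
    have "(\<lambda>z. indicator {l<..} (fst z) * indicator {z. fst z < snd z} z * ennreal (fst z powr -p) * ennreal (fr (snd z)) * ennreal ((snd z - fst z) powr (p - 1))) \<in> borel_measurable (borel \<Otimes>\<^sub>M borel)"
      by measurable
    thus ?thesis unfolding * by (simp cong: measurable_cong_sets)
  qed
  have m2': "(\<lambda>(s, x). \<Phi> x s) \<in> borel_measurable (lborel \<Otimes>\<^sub>M lborel)"
  proof -
    have *: "(\<lambda>(s, x). \<Phi> x s) = (\<lambda>z. indicator {l<..} (snd z) * indicator {z. snd z < fst z} z * ennreal (snd z powr -p) * ennreal (fr (fst z)) * ennreal ((fst z - snd z) powr (p - 1)))"
      by (auto simp: \<Phi>_def indicator_def fun_eq_iff)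
    have "(\<lambda>z. indicator {l<..} (snd z) * indicator {z. snd z < fst z} z * ennreal (snd z powr -p) * ennreal (fr (fst z)) * ennreal ((fst z - snd z) powr (p - 1))) \<in> borel_measurable (borel \<Otimes>\<^sub>M borel)"
      by measurable
    thus ?thesis unfolding * by (simp cong: measurable_cong_sets)
  qed
  have "(\<integral>\<^sup>+ x\<in>{l<..}. ennreal (x powr -p) * (ennreal p * (\<integral>\<^sup>+ s\<in>{x<..}. ennreal (f s powr p * (s - x) powr (p - 1)) \<partial>lborel)) \<partial>lborel)
      = (\<integral>\<^sup>+ x. ennreal p * (\<integral>\<^sup>+ s. \<Phi> x s \<partial>lborel) \<partial>lborel)"
  proof (intro nn_integral_cong)
    fix x :: real
    show "ennreal (x powr -p) * (ennreal p * (\<integral>\<^sup>+ s\<in>{x<..}. ennreal (f s powr p * (s - x) powr (p - 1)) \<partial>lborel)) * indicator {l<..} x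
       = ennreal p * (\<integral>\<^sup>+ s. \<Phi> x s \<partial>lborel)"
    proof (cases "l < x")
      case True
      have "(\<integral>\<^sup>+ s. \<Phi> x s \<partial>lborel) = (\<integral>\<^sup>+ s. ennreal (x powr -p) * (ennreal (f s powr p * (s - x) powr (p - 1)) * indicator {x<..} s) \<partial>lborel)"
      proof (intro nn_integral_cong)
        fix s
        show "\<Phi> x s = ennreal (x powr -p) * (ennreal (f s powr p * (s - x) powr (p - 1)) * indicator {x<..} s)"
        proof (cases "x < s")
          case True
          hence "fr s = f s powr p" using \<open>l < x\<close> by (simp add: fr_def)
          thus ?thesis using True \<open>l < x\<close> by (simp add: \<Phi>_def ennreal_mult mult_ac)
        qed (simp add: \<Phi>_def)
      qed
      also have "\<dots> = ennreal (x powr -p) * (\<integral>\<^sup>+ s\<in>{x<..}. ennreal (f s powr p * (s - x) powr (p - 1)) \<partial>lborel)"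
      proof (rule nn_integral_cmult)
        have "(\<lambda>s. ennreal (f s powr p * (s - x) powr (p - 1)) * indicator {x<..} s) = (\<lambda>s. ennreal (fr s * (s - x) powr (p - 1)) * indicator {x<..} s)"
          using True by (auto simp: fr_def indicator_def fun_eq_iff)
        thus "(\<lambda>s. ennreal (f s powr p * (s - x) powr (p - 1)) * indicator {x<..} s) \<in> borel_measurable lborel"
          by simp
      qed
      finally show ?thesis using True by (simp add: mult_ac)
    next
      case False
      hence "\<And>s. \<Phi> x s = 0" by (simp add: \<Phi>_def)
      thus ?thesis using False by simp
    qed
  qed
  also have "\<dots> = ennreal p * (\<integral>\<^sup>+ x. (\<integral>\<^sup>+ s. \<Phi> x s \<partial>lborel) \<partial>lborel)"
    by (rule nn_integral_cmult) (rule lborel.borel_measurable_nn_integral[OF m2])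
  also have "(\<integral>\<^sup>+ x. (\<integral>\<^sup>+ s. \<Phi> x s \<partial>lborel) \<partial>lborel) = (\<integral>\<^sup>+ s. (\<integral>\<^sup>+ x. \<Phi> x s \<partial>lborel) \<partial>lborel)"
    by (rule lborel_pair.Fubini'[symmetric, OF m2])
  also have "\<dots> = hardy_rhs l p f"
    unfolding hardy_rhs_def
  proof (intro nn_integral_cong)
    fix s :: real
    show "(\<integral>\<^sup>+ x. \<Phi> x s \<partial>lborel) = ennreal (f s powr p) * hardy_weight l p s * indicator {l<..} s"
    proof (cases "l < s")
      case True
      have "(\<integral>\<^sup>+ x. \<Phi> x s \<partial>lborel) = (\<integral>\<^sup>+ x. ennreal (f s powr p) * (indicator {l<..<s} x * ennreal (x powr -p * (s - x) powr (p - 1))) \<partial>lborel)"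
        using True by (intro nn_integral_cong) (auto simp: \<Phi>_def fr_def indicator_def ennreal_mult mult_ac)
      also have "\<dots> = ennreal (f s powr p) * (\<integral>\<^sup>+ x. indicator {l<..<s} x * ennreal (x powr -p * (s - x) powr (p - 1)) \<partial>lborel)"
        by (rule nn_integral_cmult) measurable
      also have "(\<integral>\<^sup>+ x. indicator {l<..<s} x * ennreal (x powr -p * (s - x) powr (p - 1)) \<partial>lborel) = hardy_weight l p s"
        unfolding hardy_weight_def using True l by (intro subst_weight) auto
      finally show ?thesis using True by simp
    next
      case False
      hence "\<And>x. \<Phi> x s = 0" by (auto simp: \<Phi>_def indicator_def)
      thus ?thesis using False by simp
    qed
  qed
  finally show ?thesis .
qed

lemma part1:
  assumes adm: "admissible l f" and l: "0 \<le> l" and p: "0 < p" "p < 1"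
  shows "hardy_lhs l p f \<le> ennreal p * hardy_rhs l p f"
proof -
  have "hardy_lhs l p f = (\<integral>\<^sup>+ x\<in>{l<..}. ennreal (x powr -p) * ennpowr (\<integral>\<^sup>+ y\<in>{x<..}. ennreal (f y) \<partial>lborel) p \<partial>lborel)"
    unfolding hardy_lhs_def using l
    by (intro nn_integral_cong) (auto simp: indicator_def lhs_rewrite)
  also have "\<dots> \<le> (\<integral>\<^sup>+ x\<in>{l<..}. ennreal (x powr -p) * (ennreal p * (\<integral>\<^sup>+ s\<in>{x<..}. ennreal (f s powr p * (s - x) powr (p - 1)) \<partial>lborel)) \<partial>lborel)"
  proof (intro nn_integral_mono)
    fix x :: real
    show "ennreal (x powr -p) * ennpowr (\<integral>\<^sup>+ y\<in>{x<..}. ennreal (f y) \<partial>lborel) p * indicator {l<..} x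
      \<le> ennreal (x powr -p) * (ennreal p * (\<integral>\<^sup>+ s\<in>{x<..}. ennreal (f s powr p * (s - x) powr (p - 1)) \<partial>lborel)) * indicator {l<..} x"
    proof (cases "l < x")
      case True
      thus ?thesis using PW[OF adm True p] by (simp add: mult_left_mono)
    qed simp
  qed
  also have "\<dots> = ennreal p * hardy_rhs l p f" by (rule swap[OF assms])
  finally show ?thesis .
qed



lemma lhs_eq:
  assumes l: "0 \<le> l"
  shows "hardy_lhs l p f = (\<integral>\<^sup>+ x\<in>{l<..}. ennreal (x powr -p) * ennpowr (\<integral>\<^sup>+ y\<in>{x<..}. ennreal (f y) \<partial>lborel) p \<partial>lborel)"
  unfolding hardy_lhs_def using l
  by (intro nn_integral_cong) (auto simp: indicator_def lhs_rewrite)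

lemma powr_shift_int:
  assumes xb: "x < b" and p: "0 < p"
  shows "(\<integral>\<^sup>+ s. ennreal ((s - x) powr (p - 1)) * indicator {x..b} s \<partial>lborel) = ennreal ((b - x) powr p / p)"
proof -
  have "(\<integral>\<^sup>+ s. ennreal ((s - x) powr (p - 1)) * indicator {x..b} s \<partial>lborel)
     = (\<integral>\<^sup>+ u. ennreal (((x + 1 * u) - x) powr (p - 1)) * indicator {x..b} (x + 1 * u) \<partial>lborel)"
    using nn_integral_real_affine[of "\<lambda>s. ennreal ((s - x) powr (p - 1)) * indicator {x..b} s" 1 x] by simp
  also have "\<dots> = (\<integral>\<^sup>+ u. ennreal (u powr (p - 1)) * indicator {0..b-x} u \<partial>lborel)"
    by (intro nn_integral_cong) (auto simp: indicator_def)
  also have "\<dots> = ennreal ((b - x) powr (p - 1 + 1) / (p - 1 + 1))"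
    using p xb by (intro nn_integral_has_integral_lebesgue' has_integral_powr_from_0) auto
  finally show ?thesis by simp
qed

lemma Beta_int:
  assumes p: "0 < p" "p < 1"
  shows "(\<integral>\<^sup>+ t\<in>{0..1}. ennreal (t powr (-p) * (1 - t) powr (p - 1)) \<partial>lborel) = ennreal (Beta (1 - p) p)"
proof -
  have "((\<lambda>t. t powr ((1 - p) - 1) * (1 - t) powr (p - 1)) has_integral Beta (1 - p) p) {0..1}"
    using p by (intro has_integral_Beta_real) auto
  hence "((\<lambda>t. t powr (-p) * (1 - t) powr (p - 1)) has_integral Beta (1 - p) p) {0..1}" by simp
  thus ?thesis by (intro nn_integral_has_integral_lebesgue') auto
qed

lemma weight_le:
  assumes x: "0 < x" "0 \<le> l" and p: "0 < p" "p < 1"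
  shows "hardy_weight l p x \<le> ennreal (Beta (1 - p) p)"
proof -
  have "hardy_weight l p x \<le> (\<integral>\<^sup>+ t\<in>{0..1}. ennreal (t powr (-p) * (1 - t) powr (p - 1)) \<partial>lborel)"
    unfolding hardy_weight_def
  proof (intro nn_integral_mono)
    fix t
    have "0 \<le> l / x" using x by auto
    thus "ennreal (t powr (-p) * (1 - t) powr (p - 1)) * indicator {l/x<..<1} t \<le> ennreal (t powr (-p) * (1 - t) powr (p - 1)) * indicator {0..1} t"
      by (auto simp: indicator_def)
  qed
  thus ?thesis using Beta_int[OF p] by simp
qed

lemma weight_ge:
  assumes x: "2 * l < x" "0 \<le> l" and p: "0 < p" "p < 1"
  shows "ennreal (1/2) \<le> hardy_weight l p x"
proof -
  have x0: "0 < x" using x by auto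
  have "ennreal (1/2) = (\<integral>\<^sup>+ t. indicator {1/2<..<1::real} t \<partial>lborel)" by simp
  also have "\<dots> \<le> hardy_weight l p x"
    unfolding hardy_weight_def
  proof (intro nn_integral_mono)
    fix t :: real
    show "indicator {1/2<..<1} t \<le> ennreal (t powr (-p) * (1 - t) powr (p - 1)) * indicator {l/x<..<1} t"
    proof (cases "1/2 < t \<and> t < 1")
      case True
      have lx: "l / x < 1/2" using x x0 by (simp add: field_simps)
      have a: "1 \<le> t powr (-p)" using powr_mono2'[of "-p" t 1] True p by auto
      have b: "1 \<le> (1 - t) powr (p - 1)" using powr_mono2'[of "p - 1" "1 - t" 1] True p by auto
      have "1 \<le> t powr (-p) * (1 - t) powr (p - 1)" using a b by (metis mult_mono' mult_1 zero_le_one)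
      moreover have "l/x < t" using True lx by linarith
      ultimately show ?thesis using True by (simp add: indicator_def)
    qed (auto simp: indicator_def)
  qed
  finally show ?thesis .
qed

lemma sharp:
  assumes l: "0 \<le> l" and lb: "l < b" and p: "0 < p" "p < 1"
  defines "f0 \<equiv> (\<lambda>y. indicator {l<..b} y :: real)"
  shows "admissible l f0" "ennreal p * hardy_rhs l p f0 \<le> hardy_lhs l p f0"
proof -
  show adm: "admissible l f0"
    unfolding admissible_def set_borel_measurable_def f0_def
    by (auto simp: indicator_def)
  have "ennreal p * hardy_rhs l p f0
     = (\<integral>\<^sup>+ x\<in>{l<..}. ennreal (x powr -p) * (ennreal p * (\<integral>\<^sup>+ s\<in>{x<..}. ennreal (f0 s powr p * (s - x) powr (p - 1)) \<partial>lborel)) \<partial>lborel)"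
    by (rule swap[OF adm l p, symmetric])
  also have "\<dots> \<le> (\<integral>\<^sup>+ x\<in>{l<..}. ennreal (x powr -p) * ennpowr (\<integral>\<^sup>+ y\<in>{x<..}. ennreal (f0 y) \<partial>lborel) p \<partial>lborel)"
  proof (intro nn_integral_mono)
    fix x :: real
    have "ennreal p * (\<integral>\<^sup>+ s\<in>{x<..}. ennreal (f0 s powr p * (s - x) powr (p - 1)) \<partial>lborel)
          \<le> ennpowr (\<integral>\<^sup>+ y\<in>{x<..}. ennreal (f0 y) \<partial>lborel) p" if x: "l < x"
    proof (cases "x < b")
      case True
      have "(\<integral>\<^sup>+ s\<in>{x<..}. ennreal (f0 s powr p * (s - x) powr (p - 1)) \<partial>lborel)
           \<le> (\<integral>\<^sup>+ s. ennreal ((s - x) powr (p - 1)) * indicator {x..b} s \<partial>lborel)"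
        by (intro nn_integral_mono) (auto simp: f0_def indicator_def)
      also have "\<dots> = ennreal ((b - x) powr p / p)" using powr_shift_int[OF True p(1)] .
      finally have K: "ennreal p * (\<integral>\<^sup>+ s\<in>{x<..}. ennreal (f0 s powr p * (s - x) powr (p - 1)) \<partial>lborel)
          \<le> ennreal p * ennreal ((b - x) powr p / p)" by (rule mult_left_mono) simp
      have "ennreal p * ennreal ((b - x) powr p / p) = ennreal ((b - x) powr p)"
        using p by (simp add: ennreal_mult[symmetric])
      moreover have "(\<integral>\<^sup>+ y\<in>{x<..}. ennreal (f0 y) \<partial>lborel) = ennreal (b - x)"
      proof -
        have "(\<integral>\<^sup>+ y\<in>{x<..}. ennreal (f0 y) \<partial>lborel) = (\<integral>\<^sup>+ y. indicator {x<..b} y \<partial>lborel)"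
          using x by (intro nn_integral_cong) (auto simp: f0_def indicator_def)
        thus ?thesis using True by simp
      qed
      moreover have "ennpowr (ennreal (b - x)) p = ennreal ((b-x) powr p)" using True by (simp add: ennpowr_def)
      ultimately show ?thesis using K by simp
    next
      case False
      have "(\<lambda>s. ennreal (f0 s powr p * (s - x) powr (p - 1)) * indicator {x<..} s) = (\<lambda>_. 0)"
        using False by (auto simp: f0_def indicator_def fun_eq_iff)
      thus ?thesis by simp
    qed
    thus "ennreal (x powr -p) * (ennreal p * (\<integral>\<^sup>+ s\<in>{x<..}. ennreal (f0 s powr p * (s - x) powr (p - 1)) \<partial>lborel)) * indicator {l<..} x
       \<le> ennreal (x powr -p) * ennpowr (\<integral>\<^sup>+ y\<in>{x<..}. ennreal (f0 y) \<partial>lborel) p * indicator {l<..} x"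
      by (cases "l < x") (auto intro: mult_left_mono)
  qed
  also have "\<dots> = hardy_lhs l p f0" by (rule lhs_eq[OF l, symmetric])
  finally show "ennreal p * hardy_rhs l p f0 \<le> hardy_lhs l p f0" .
qed

lemma sharp_rhs:
  assumes l: "0 \<le> l" and p: "0 < p" "p < 1"
  defines "f0 \<equiv> (\<lambda>y. indicator {l<..2*l+2} y :: real)"
  shows "hardy_rhs l p f0 < top" "0 < hardy_rhs l p f0"
proof -
  have "hardy_rhs l p f0 \<le> (\<integral>\<^sup>+ x. ennreal (Beta (1 - p) p) * indicator {l<..2*l+2} x \<partial>lborel)"
    unfolding hardy_rhs_def
  proof (intro nn_integral_mono)
    fix x :: real
    show "ennreal (f0 x powr p) * hardy_weight l p x * indicator {l<..} x \<le> ennreal (Beta (1 - p) p) * indicator {l<..2*l+2} x"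
    proof (cases "l < x \<and> x \<le> 2*l+2")
      case True
      thus ?thesis using weight_le[of x l p] l p by (auto simp: f0_def indicator_def)
    next
      case False
      thus ?thesis by (auto simp: f0_def indicator_def)
    qed
  qed
  also have "\<dots> = ennreal (Beta (1 - p) p) * ennreal (l + 2)"
    using l by (subst nn_integral_cmult_indicator) auto
  also have "\<dots> < top" by (simp add: ennreal_mult_less_top)
  finally show "hardy_rhs l p f0 < top" .
  have "0 < ennreal (1/2) * ennreal 1" by (simp add: ennreal_inverse_positive)
  also have "ennreal (1/2) * ennreal 1 = (\<integral>\<^sup>+ x. ennreal (1/2) * indicator {2*l+1<..<2*l+2} x \<partial>lborel)"
    by (subst nn_integral_cmult_indicator) auto
  also have "\<dots> \<le> hardy_rhs l p f0"
    unfolding hardy_rhs_def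
  proof (intro nn_integral_mono)
    fix x :: real
    show "ennreal (1/2) * indicator {2*l+1<..<2*l+2} x \<le> ennreal (f0 x powr p) * hardy_weight l p x * indicator {l<..} x"
    proof (cases "2*l+1 < x \<and> x < 2*l+2")
      case True
      hence f1: "f0 x = 1" "l < x" using l by (auto simp: f0_def indicator_def)
      have w: "ennreal (1/2) \<le> hardy_weight l p x" by (rule weight_ge) (use True l p in auto)
      have "ennreal (1/2) * indicator {2*l+1<..<2*l+2} x = ennreal (1/2)" using True by simp
      moreover have "ennreal (f0 x powr p) * hardy_weight l p x * indicator {l<..} x = hardy_weight l p x"
        using f1 by simp
      ultimately show ?thesis using w by simp
    qed (auto simp: indicator_def)
  qed
  finally show "0 < hardy_rhs l p f0" .
qed

lemma part2:
  assumes l: "0 \<le> l" and p: "0 < p" "p < 1" and c: "c < p"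
  shows "\<exists>f. admissible l f \<and> hardy_lhs l p f > ennreal c * hardy_rhs l p f"
proof -
  define f0 where "f0 = (\<lambda>y. indicator {l<..2*l+2} y :: real)"
  have lb: "l < 2*l+2" using l by simp
  note S = sharp[OF l lb p, folded f0_def]
  note R = sharp_rhs[OF l p, folded f0_def]
  obtain r where r: "hardy_rhs l p f0 = ennreal r" "0 \<le> r" using R(1) by (cases "hardy_rhs l p f0") auto
  have r0: "0 < r" using R(2) r by auto
  have "ennreal c * hardy_rhs l p f0 < ennreal p * hardy_rhs l p f0"
  proof (cases "c \<le> 0")
    case True
    thus ?thesis using r r0 p by (simp add: ennreal_neg ennreal_mult[symmetric])
  next
    case False
    hence "c * r < p * r" using c r0 by simp
    thus ?thesis using r False p r0 by (simp add: ennreal_mult[symmetric] ennreal_less_iff)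
  qed
  thus ?thesis using S by (intro exI[of _ f0]) (auto intro: less_le_trans)
qed



lemma Beta_refl:
  assumes p: "0 < p" "p < 1"
  shows "Beta (1 - p) p = pi / sin (pi * p)"
proof -
  have h: "Gamma (complex_of_real p) * Gamma (1 - complex_of_real p) = of_real pi / sin (of_real pi * complex_of_real p)"
    by (rule Gamma_reflection_complex)
  have e1: "1 - complex_of_real p = complex_of_real (1 - p)" by simp
  have "complex_of_real (Gamma p * Gamma (1 - p)) = complex_of_real (pi / sin (pi * p))"
    using h unfolding e1 by (simp only: Gamma_complex_of_real sin_of_real of_real_mult[symmetric] of_real_divide[symmetric])
  hence "Gamma p * Gamma (1 - p) = pi / sin (pi * p)" by (simp only: of_real_eq_iff)
  thus ?thesis by (simp add: Beta_def mult.commute)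
qed

lemma weight0:
  assumes p: "0 < p" "p < 1"
  shows "hardy_weight 0 p x = ennreal (pi / sin (pi * p))"
proof -
  have "hardy_weight 0 p x = (\<integral>\<^sup>+ t\<in>{0..1}. ennreal (t powr (-p) * (1 - t) powr (p - 1)) \<partial>lborel)"
    unfolding hardy_weight_def by (intro nn_integral_cong) (auto simp: indicator_def)
  thus ?thesis using Beta_int[OF p] Beta_refl[OF p] by simp
qed

lemma rhs0:
  assumes adm: "admissible 0 f" and p: "0 < p" "p < 1"
  shows "hardy_rhs 0 p f = ennreal (pi / sin (pi * p)) * (\<integral>\<^sup>+ x\<in>{0<..}. ennreal (f x powr p) \<partial>lborel)"
proof -
  have fm: "(\<lambda>y. indicator {0<..} y * f y) \<in> borel_measurable borel"
  proof -
    have "(\<lambda>y. indicator {0<..} y *\<^sub>R f y) \<in> borel_measurable lborel"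
      using adm unfolding admissible_def set_borel_measurable_def by auto
    thus ?thesis by (simp cong: measurable_cong_sets)
  qed
  define h where "h y = indicator {0<..} y * f y" for y
  have hm[measurable]: "h \<in> borel_measurable borel" unfolding h_def by (rule fm)
  have "hardy_rhs 0 p f = (\<integral>\<^sup>+ x. ennreal (pi / sin (pi * p)) * (ennreal (h x powr p) * indicator {0<..} x) \<partial>lborel)"
    unfolding hardy_rhs_def weight0[OF p] by (intro nn_integral_cong) (auto simp: h_def indicator_def mult_ac)
  also have "\<dots> = ennreal (pi / sin (pi * p)) * (\<integral>\<^sup>+ x. ennreal (h x powr p) * indicator {0<..} x \<partial>lborel)"
    by (intro nn_integral_cmult) measurable
  also have "(\<integral>\<^sup>+ x. ennreal (h x powr p) * indicator {0<..} x \<partial>lborel) = (\<integral>\<^sup>+ x\<in>{0<..}. ennreal (f x powr p) \<partial>lborel)"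
    by (intro nn_integral_cong) (auto simp: h_def indicator_def)
  finally show ?thesis .
qed

lemma sinpos: "0 < p \<Longrightarrow> p < 1 \<Longrightarrow> 0 < sin (pi * p)"
  by (intro sin_gt_zero) auto

theorem mainTheorem13:
  fixes p l :: real
  assumes "0 < p" "p < 1" "0 \<le> l"
  shows "(\<forall>f. admissible l f \<longrightarrow>
            hardy_lhs l p f \<le> ennreal p * hardy_rhs l p f)
       \<and> (\<forall>c::real. c < p \<longrightarrow>
            (\<exists>f. admissible l f \<and> hardy_lhs l p f > ennreal c * hardy_rhs l p f))
       \<and> (\<forall>f. admissible 0 f \<longrightarrow>
            hardy_lhs 0 p f \<le> ennreal (pi * p / sin (pi * p)) *
                               (\<integral>\<^sup>+ x \<in> {0<..}. ennreal (f x powr p) \<partial>lborel))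
       \<and> (\<forall>c::real. c < pi * p / sin (pi * p) \<longrightarrow>
            (\<exists>f. admissible 0 f \<and>
                 hardy_lhs 0 p f > ennreal c * (\<integral>\<^sup>+ x \<in> {0<..}. ennreal (f x powr p) \<partial>lborel)))"
proof (intro conjI allI impI)
  fix f assume "admissible l f"
  thus "hardy_lhs l p f \<le> ennreal p * hardy_rhs l p f" using part1 assms by blast
next
  fix c :: real assume "c < p"
  thus "\<exists>f. admissible l f \<and> hardy_lhs l p f > ennreal c * hardy_rhs l p f" using part2 assms by blast
next
  have B0: "0 \<le> pi / sin (pi * p)" using sinpos[OF assms(1,2)] by simp
  have eqr: "p * (pi / sin (pi * p)) = pi * p / sin (pi * p)" by (metis mult.commute times_divide_eq_right)
  have eqc: "ennreal p * ennreal (pi / sin (pi * p)) = ennreal (pi * p / sin (pi * p))"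
    unfolding eqr[symmetric] by (intro ennreal_mult[symmetric]) (use assms B0 in auto)
  {
    fix f assume adm: "admissible 0 f"
    have "hardy_lhs 0 p f \<le> ennreal p * hardy_rhs 0 p f" using part1[OF adm] assms by simp
    also have "\<dots> = ennreal (pi * p / sin (pi * p)) * (\<integral>\<^sup>+ x \<in> {0<..}. ennreal (f x powr p) \<partial>lborel)"
      unfolding rhs0[OF adm assms(1,2)] by (simp add: mult.assoc[symmetric] eqc)
    finally show "hardy_lhs 0 p f \<le> ennreal (pi * p / sin (pi * p)) * (\<integral>\<^sup>+ x \<in> {0<..}. ennreal (f x powr p) \<partial>lborel)" .
  }
  fix c :: real assume c: "c < pi * p / sin (pi * p)"
  define f0 where "f0 = (\<lambda>y::real. indicator {0<..2::real} y :: real)"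
  note S = sharp[of 0 2 p, OF _ _ assms(1,2), folded f0_def]
  have adm: "admissible 0 f0" using S by simp
  have I0: "(\<integral>\<^sup>+ x \<in> {0<..}. ennreal (f0 x powr p) \<partial>lborel) = ennreal 2"
  proof -
    have "(\<integral>\<^sup>+ x \<in> {0<..}. ennreal (f0 x powr p) \<partial>lborel) = (\<integral>\<^sup>+ x. indicator {0<..2::real} x \<partial>lborel)"
      by (intro nn_integral_cong) (auto simp: f0_def indicator_def)
    thus ?thesis by simp
  qed
  have K0: "0 < pi * p / sin (pi * p)" using sinpos[OF assms(1,2)] assms by simp
  have "ennreal c * ennreal 2 < ennreal (pi * p / sin (pi * p)) * ennreal 2"
  proof (cases "c \<le> 0")
    case True thus ?thesis using K0 by (simp add: ennreal_neg ennreal_zero_less_mult_iff)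
  next
    case False
    have "c * 2 < pi * p / sin (pi * p) * 2" using c by (intro mult_strict_right_mono) auto
    moreover have a: "ennreal c * ennreal 2 = ennreal (c*2)" using False by (subst ennreal_mult) auto
    moreover have b: "ennreal (pi * p / sin (pi * p)) * ennreal 2 = ennreal (pi * p / sin (pi * p) * 2)"
      using K0 by (subst ennreal_mult) auto
    ultimately show ?thesis using False by (simp only: a b ennreal_less_iff)
  qed
  also have "ennreal (pi * p / sin (pi * p)) * ennreal 2 = ennreal p * hardy_rhs 0 p f0"
    unfolding rhs0[OF adm assms(1,2)] I0 by (simp add: mult.assoc[symmetric] eqc)
  also have "\<dots> \<le> hardy_lhs 0 p f0" using S by simp
  finally show "\<exists>f. admissible 0 f \<and> hardy_lhs 0 p f > ennreal c * (\<integral>\<^sup>+ x \<in> {0<..}. ennreal (f x powr p) \<partial>lborel)"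
    using adm I0 by (intro exI[of _ f0]) simp
qed


end
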